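(* The following are equivalent: (1) for all $i,j$, $w_i/w_j\in\mathbb{Q}\Rightarrow w_i=w_j$; (2) every periodic orbit of $H_w$ is NDR in its energy surface.
   Context: $H_w(x,\xi):=\frac12(|\xi|^2+\sum_{j=1}^nw_j^2x_j^2)$ on $\mathbb{R}^{2n}$ with $w\in(\mathbb{R}_+^* )^n$, flow $\Phi_t$ of $\dot z=J\nabla H_w(z)$, $J=\begin{pmatrix}0&I_n\\-I_n&0\end{pmatrix}$, $M_z(t)=\partial_z\Phi_t(z)$, $E_1(T,z):=\sum_{k\ge1}\ker(M_z(T)-I)^k$. $G_{max}:=\{g\in Sp(n):H_w(gz)=H_w(z)\ \forall z\}$ (the group of linear symplectic symmetries; here it is a compact Lie group), with Lie algebra $\mathcal{G}$, and $\mathcal{G}z:=\{Az:A\in\mathcal{G}\}$. A periodic orbit is a pair $(T,z)$, $T\ne0$, $z\ne0$, $\Phi_T(z)=z$; it is NDR in its energy surface if $\dim E_1(T,z)=\dim(\mathbb{R}J\nabla H_w(z)+\mathcal{G}z)+1$. *)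

theory Defs
  imports "HOL-Analysis.Analysis"
begin

type_synonym 'n phase = "(real^'n) \<times> (real^'n)"

definition Jmap :: "'n::finite phase \<Rightarrow> 'n phase" where
  "Jmap z = (snd z, - fst z)"

definition Hw :: "real^'n::finite \<Rightarrow> 'n phase \<Rightarrow> real" where
  "Hw w z = (1/2) * ((norm (snd z))\<^sup>2 + (\<Sum>j\<in>UNIV. (w$j)\<^sup>2 * (fst z $ j)\<^sup>2))"

definition grad :: "('a::real_inner \<Rightarrow> real) \<Rightarrow> 'a \<Rightarrow> 'a" where
  "grad f z = (THE g. (f has_derivative (\<lambda>h. g \<bullet> h)) (at z))"

definition hamvf :: "real^'n::finite \<Rightarrow> 'n phase \<Rightarrow> 'n phase" where
  "hamvf w z = Jmap (grad (Hw w) z)"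

definition flow :: "real^'n::finite \<Rightarrow> real \<Rightarrow> 'n phase \<Rightarrow> 'n phase" where
  "flow w = (THE Phi. \<forall>z. Phi 0 z = z \<and>
      (\<forall>t. ((\<lambda>s. Phi s z) has_vector_derivative hamvf w (Phi t z)) (at t)))"

definition Mz :: "real^'n::finite \<Rightarrow> 'n phase \<Rightarrow> real \<Rightarrow> 'n phase \<Rightarrow> 'n phase" where
  "Mz w z t = (THE L. (flow w t has_derivative L) (at z))"

definition E1 :: "real^'n::finite \<Rightarrow> real \<Rightarrow> 'n phase \<Rightarrow> 'n phase set" where
  "E1 w T z = span (\<Union>k\<in>{1..}. {v. ((\<lambda>u. Mz w z T u - u) ^^ k) v = 0})"

definition omega :: "'n::finite phase \<Rightarrow> 'n phase \<Rightarrow> real" where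
  "omega u v = u \<bullet> Jmap v"

definition Sp :: "('n::finite phase \<Rightarrow> 'n phase) set" where
  "Sp = {g. linear g \<and> (\<forall>u v. omega (g u) (g v) = omega u v)}"

definition Gmax :: "real^'n::finite \<Rightarrow> ('n phase \<Rightarrow> 'n phase) set" where
  "Gmax w = {g \<in> Sp. \<forall>z. Hw w (g z) = Hw w z}"

definition lin_exp :: "('a::real_normed_vector \<Rightarrow> 'a) \<Rightarrow> 'a \<Rightarrow> 'a" where
  "lin_exp A v = (\<Sum>k. (1 / fact k) *\<^sub>R ((A ^^ k) v))"

definition lie_alg :: "('a::real_normed_vector \<Rightarrow> 'a) set \<Rightarrow> ('a \<Rightarrow> 'a) set" where
  "lie_alg G = {A. linear A \<and> (\<forall>t. lin_exp (\<lambda>u. t *\<^sub>R A u) \<in> G)}"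

definition periodic_orbit :: "real^'n::finite \<Rightarrow> real \<Rightarrow> 'n phase \<Rightarrow> bool" where
  "periodic_orbit w T z \<longleftrightarrow> T \<noteq> 0 \<and> z \<noteq> 0 \<and> flow w T z = z"

definition NDR :: "real^'n::finite \<Rightarrow> real \<Rightarrow> 'n phase \<Rightarrow> bool" where
  "NDR w T z \<longleftrightarrow>
     dim (E1 w T z) =
     dim {a *\<^sub>R hamvf w z + A z | a A. A \<in> lie_alg (Gmax w)} + 1"

end

theory Submission
  imports Defs
begin


lemma vec_has_vector_derivative:
  fixes f :: "real \<Rightarrow> real^'n::finite"
  assumes "\<And>i. ((\<lambda>t. f t $ i) has_real_derivative f' $ i) (at t)"
  shows "(f has_vector_derivative f') (at t)"
proof -
  have "\<forall>b\<in>Basis. ((\<lambda>x. f x \<bullet> b) has_derivative (\<lambda>x. (x *\<^sub>R f') \<bullet> b)) (at t)"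
  proof
    fix b :: "real^'n" assume "b \<in> Basis"
    then obtain i where b: "b = axis i 1" by (auto simp: Basis_vec_def)
    have e1: "(\<lambda>x. f x \<bullet> b) = (\<lambda>x. f x $ i)" unfolding b by (simp add: inner_axis)
    have e2: "(\<lambda>x. (x *\<^sub>R f') \<bullet> b) = (*) (f' $ i)" unfolding b by (auto simp add: inner_axis fun_eq_iff)
    show "((\<lambda>x. f x \<bullet> b) has_derivative (\<lambda>x. (x *\<^sub>R f') \<bullet> b)) (at t)"
      unfolding e1 e2 using assms[of i] by (simp add: has_field_derivative_def)
  qed
  then have "(f has_derivative (\<lambda>h. h *\<^sub>R f')) (at t)"
    using has_derivative_componentwise_within by blast
  then show ?thesis by (simp add: has_vector_derivative_def)
qed


lemma vec_has_vector_derivative_comp: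
  fixes f :: "real \<Rightarrow> real^'n::finite"
  assumes "(f has_vector_derivative f') (at t)"
  shows "((\<lambda>t. f t $ i) has_real_derivative f' $ i) (at t)"
proof -
  have "((\<lambda>t. f t $ i) has_derivative (\<lambda>h. (h *\<^sub>R f') $ i)) (at t)"
    using bounded_linear.has_derivative[OF bounded_linear_vec_nth assms[unfolded has_vector_derivative_def]] .
  moreover have "(\<lambda>h. (h *\<^sub>R f') $ i) = (*) (f' $ i)" by (auto simp: fun_eq_iff)
  ultimately show ?thesis by (simp add: has_field_derivative_def)
qed

definition Qf :: "real^'n::finite \<Rightarrow> 'n phase \<Rightarrow> 'n phase \<Rightarrow> real" where
  "Qf w u v = (\<Sum>j\<in>UNIV. (w$j)^2 * (fst u $ j * fst v $ j) + snd u $ j * snd v $ j)"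

definition Dg :: "real^'n::finite \<Rightarrow> 'n phase \<Rightarrow> 'n phase" where
  "Dg w z = ((\<chi> j. (w$j)^2 * fst z $ j), snd z)"

lemma Hw_Qf: "Hw w z = Qf w z z / 2"
  unfolding Hw_def Qf_def power2_norm_eq_inner inner_vec_def
  by (simp add: sum.distrib power2_eq_square algebra_simps)

lemma Dg_inner: "Dg w z \<bullet> h = Qf w z h"
  unfolding Dg_def Qf_def inner_prod_def inner_vec_def
  by (simp add: sum.distrib algebra_simps)

lemma Qf_sym: "Qf w u v = Qf w v u"
  unfolding Qf_def by (simp add: algebra_simps)

lemma Qf_add_right: "Qf w u (v + v') = Qf w u v + Qf w u v'"
  unfolding Qf_def by (simp add: algebra_simps sum.distrib)
lemma Qf_add_left: "Qf w (v + v') u = Qf w v u + Qf w v' u"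
  unfolding Qf_def by (simp add: algebra_simps sum.distrib)
lemma Qf_scale_right: "Qf w u (c *\<^sub>R v) = c * Qf w u v"
  unfolding Qf_def by (simp add: algebra_simps sum_distrib_left)
lemma Qf_scale_left: "Qf w (c *\<^sub>R v) u = c * Qf w v u"
  unfolding Qf_def by (simp add: algebra_simps sum_distrib_left)
lemma Qf_diff_right: "Qf w u (v - v') = Qf w u v - Qf w u v'"
  unfolding Qf_def by (simp add: algebra_simps sum_subtractf)
lemma Qf_diff_left: "Qf w (v - v') u = Qf w v u - Qf w v' u"
  unfolding Qf_def by (simp add: algebra_simps sum_subtractf)
lemma Qf_minus_right: "Qf w u (- v) = - Qf w u v"
  using Qf_scale_right[of w u "-1" v] by simp
lemma Qf_minus_left: "Qf w (- v) u = - Qf w v u"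
  using Qf_scale_left[of w "-1" v u] by simp
lemma Qf_zero_right[simp]: "Qf w u 0 = 0"
  unfolding Qf_def by simp
lemma Qf_zero_left[simp]: "Qf w 0 u = 0"
  unfolding Qf_def by simp

lemmas Qf_lin = Qf_add_right Qf_add_left Qf_scale_right Qf_scale_left Qf_diff_right
  Qf_diff_left Qf_minus_right Qf_minus_left

lemma Qf_nonneg: "Qf w u u \<ge> 0"
  unfolding Qf_def by (intro sum_nonneg) (auto intro!: add_nonneg_nonneg)

lemma Qf_pos:
  assumes "\<forall>j. w $ j > 0" "u \<noteq> 0"
  shows "Qf w u u > 0"
proof (rule ccontr)
  assume "\<not> Qf w u u > 0"
  then have "Qf w u u = 0" using Qf_nonneg[of w u] by linarith
  then have "\<forall>j\<in>UNIV. (w$j)^2 * (fst u $ j * fst u $ j) + snd u $ j * snd u $ j = 0"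
    unfolding Qf_def by (subst (asm) sum_nonneg_eq_0_iff) auto
  then have "\<forall>j. fst u $ j = 0 \<and> snd u $ j = 0"
  proof (intro allI)
    fix j
    assume h: "\<forall>j\<in>UNIV. (w$j)^2 * (fst u $ j * fst u $ j) + snd u $ j * snd u $ j = 0"
    have "w $ j \<noteq> 0" using assms(1) by (metis less_irrefl)
    then show "fst u $ j = 0 \<and> snd u $ j = 0" using h by (auto simp: add_nonneg_eq_0_iff)
  qed
  then have "u = 0" by (simp add: prod_eq_iff vec_eq_iff)
  then show False using assms by simp
qed

lemma fst_nth_has_derivative: "((\<lambda>x. fst x $ j) has_derivative (\<lambda>h. fst h $ j)) F"
  by (intro bounded_linear_imp_has_derivative bounded_linear_compose[OF bounded_linear_vec_nth] bounded_linear_fst)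
lemma snd_nth_has_derivative: "((\<lambda>x. snd x $ j) has_derivative (\<lambda>h. snd h $ j)) F"
  by (intro bounded_linear_imp_has_derivative bounded_linear_compose[OF bounded_linear_vec_nth] bounded_linear_snd)

lemma Hw_has_derivative: "(Hw w has_derivative (\<lambda>h. Dg w z \<bullet> h)) (at z)"
proof -
  have eq: "Hw w = (\<lambda>z. (1/2) * (\<Sum>j\<in>UNIV. (w$j)^2 * (fst z $ j * fst z $ j) + snd z $ j * snd z $ j))"
    by (auto simp: fun_eq_iff Hw_Qf Qf_def)
  have d: "\<And>j. ((\<lambda>x. (w$j)^2 * (fst x$j * fst x$j) + snd x$j * snd x$j) has_derivative 
     (\<lambda>h. (w$j)^2*(fst z$j * fst h$j + fst h$j * fst z$j) + (snd z$j * snd h$j + snd h$j * snd z$j))) (at z)"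
    by (intro has_derivative_add has_derivative_mult_right has_derivative_mult fst_nth_has_derivative snd_nth_has_derivative)
  have "((\<lambda>z. (1/2) * (\<Sum>j\<in>UNIV. (w$j)^2 * (fst z $ j * fst z $ j) + snd z $ j * snd z $ j))
      has_derivative (\<lambda>h. (1/2) * (\<Sum>j\<in>UNIV. (w$j)^2 * (fst z $ j * fst h $ j + fst h $ j * fst z $ j)
           + (snd z $ j * snd h $ j + snd h $ j * snd z $ j)))) (at z)"
    by (intro has_derivative_mult_right has_derivative_sum d)
  moreover have "(\<lambda>h. (1/2) * (\<Sum>j\<in>UNIV. (w$j)^2 * (fst z $ j * fst h $ j + fst h $ j * fst z $ j)
           + (snd z $ j * snd h $ j + snd h $ j * snd z $ j))) = (\<lambda>h. Dg w z \<bullet> h)"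
    by (auto simp: fun_eq_iff Dg_inner Qf_def sum_distrib_left algebra_simps) 
  ultimately show ?thesis unfolding eq by simp
qed

lemma grad_Hw: "grad (Hw w) z = Dg w z"
  unfolding grad_def
proof (rule the_equality)
  show "(Hw w has_derivative (\<bullet>) (Dg w z)) (at z)" using Hw_has_derivative[of w z] by simp
next
  fix g assume "(Hw w has_derivative (\<bullet>) g) (at z)"
  then have "(\<bullet>) g = (\<lambda>h. Dg w z \<bullet> h)" using Hw_has_derivative[of w z] has_derivative_unique by blast
  then have "g \<bullet> (g - Dg w z) = Dg w z \<bullet> (g - Dg w z)" by metis
  then have "(g - Dg w z) \<bullet> (g - Dg w z) = 0" by (simp add: inner_diff_left)
  then show "g = Dg w z" by simp
qed

lemma hamvf_eq: "hamvf w z = (snd z, - (\<chi> j. (w$j)^2 * fst z $ j))"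
  unfolding hamvf_def grad_Hw Jmap_def Dg_def by simp



definition Phi :: "real^'n::finite \<Rightarrow> real \<Rightarrow> 'n phase \<Rightarrow> 'n phase" where
  "Phi w t z = ((\<chi> j. fst z $ j * cos (w$j * t) + snd z $ j * sin (w$j * t) / w$j),
                (\<chi> j. - (w$j * fst z $ j * sin (w$j * t)) + snd z $ j * cos (w$j * t)))"

lemma Phi_0: "Phi w 0 z = z"
  by (simp add: Phi_def prod_eq_iff vec_eq_iff)

lemma Phi_deriv:
  assumes w: "\<forall>j. w $ j > 0"
  shows "((\<lambda>s. Phi w s z) has_vector_derivative hamvf w (Phi w t z)) (at t)"
proof -
  have a: "((\<lambda>s. fst z $ j * cos (w$j * s) + snd z $ j * sin (w$j * s) / w$j) has_real_derivative
      (- (w$j * fst z $ j * sin (w$j * t)) + snd z $ j * cos (w$j * t))) (at t)" for j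
  proof -
    have "w$j \<noteq> 0" using w by (metis less_irrefl)
    show ?thesis
      using \<open>w$j \<noteq> 0\<close> by (auto intro!: derivative_eq_intros simp: field_simps)
  qed
  have b: "((\<lambda>s. - (w$j * fst z $ j * sin (w$j * s)) + snd z $ j * cos (w$j * s)) has_real_derivative
      - ((w$j)^2 * (fst z $ j * cos (w$j * t) + snd z $ j * sin (w$j * t) / w$j))) (at t)" for j
  proof -
    have "w$j \<noteq> 0" using w by (metis less_irrefl)
    show ?thesis
      using \<open>w$j \<noteq> 0\<close> by (auto intro!: derivative_eq_intros simp: field_simps power2_eq_square)
  qed
  show ?thesis
    unfolding Phi_def hamvf_eq
    by (intro has_vector_derivative_Pair vec_has_vector_derivative) (use a b in simp_all)
qed

lemma phase_has_vector_derivative_comp1: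
  fixes f :: "real \<Rightarrow> 'n::finite phase"
  assumes "(f has_vector_derivative f') (at t)"
  shows "((\<lambda>t. fst (f t) $ i) has_real_derivative fst f' $ i) (at t)"
proof -
  have bl: "bounded_linear (\<lambda>x::'n phase. fst x $ i)"
    by (intro bounded_linear_compose[OF bounded_linear_vec_nth] bounded_linear_fst)
  have "((\<lambda>t. fst (f t) $ i) has_derivative (\<lambda>h. fst (h *\<^sub>R f') $ i)) (at t)"
    using bounded_linear.has_derivative[OF bl assms[unfolded has_vector_derivative_def]] .
  moreover have "(\<lambda>h. fst (h *\<^sub>R f') $ i) = (*) (fst f' $ i)" by (auto simp: fun_eq_iff)
  ultimately show ?thesis by (simp add: has_field_derivative_def)
qed

lemma phase_has_vector_derivative_comp2:
  fixes f :: "real \<Rightarrow> 'n::finite phase"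
  assumes "(f has_vector_derivative f') (at t)"
  shows "((\<lambda>t. snd (f t) $ i) has_real_derivative snd f' $ i) (at t)"
proof -
  have bl: "bounded_linear (\<lambda>x::'n phase. snd x $ i)"
    by (intro bounded_linear_compose[OF bounded_linear_vec_nth] bounded_linear_snd)
  have "((\<lambda>t. snd (f t) $ i) has_derivative (\<lambda>h. snd (h *\<^sub>R f') $ i)) (at t)"
    using bounded_linear.has_derivative[OF bl assms[unfolded has_vector_derivative_def]] .
  moreover have "(\<lambda>h. snd (h *\<^sub>R f') $ i) = (*) (snd f' $ i)" by (auto simp: fun_eq_iff)
  ultimately show ?thesis by (simp add: has_field_derivative_def)
qed

lemma ode_unique:
  fixes D :: "real \<Rightarrow> 'n::finite phase"
  assumes w: "\<forall>j. w $ j > 0"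
    and D0: "D 0 = 0"
    and dD: "\<And>t. (D has_vector_derivative hamvf w (D t)) (at t)"
  shows "D s = 0"
proof -
  define E where "E = (\<lambda>s. \<Sum>j\<in>UNIV. (w$j)^2 * (fst (D s) $ j * fst (D s) $ j) + snd (D s) $ j * snd (D s) $ j)"
  have d1: "((\<lambda>t. fst (D t) $ j) has_real_derivative snd (D t) $ j) (at t)" for j t
    using phase_has_vector_derivative_comp1[OF dD[of t], of j] by (simp add: hamvf_eq)
  have d2: "((\<lambda>t. snd (D t) $ j) has_real_derivative - ((w$j)^2 * fst (D t) $ j)) (at t)" for j t
    using phase_has_vector_derivative_comp2[OF dD[of t], of j] by (simp add: hamvf_eq)
  have dE: "DERIV E t :> 0" for t
  proof -
    have "DERIV E t :> (\<Sum>j\<in>UNIV. (w$j)^2 * (snd (D t) $ j * fst (D t) $ j + snd (D t) $ j * fst (D t) $ j)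
       + (- ((w$j)^2 * fst (D t) $ j) * snd (D t) $ j + - ((w$j)^2 * fst (D t) $ j) * snd (D t) $ j))"
      unfolding E_def
      by (intro DERIV_sum DERIV_add DERIV_cmult DERIV_mult d1 d2)
    moreover have "(\<Sum>j\<in>UNIV. (w$j)^2 * (snd (D t) $ j * fst (D t) $ j + snd (D t) $ j * fst (D t) $ j)
       + (- ((w$j)^2 * fst (D t) $ j) * snd (D t) $ j + - ((w$j)^2 * fst (D t) $ j) * snd (D t) $ j)) = 0"
      by (simp add: algebra_simps)
    ultimately show ?thesis by simp
  qed
  have "E s = E 0" using DERIV_isconst_all[of E s 0] dE by blast
  also have "E 0 = 0" unfolding E_def D0 by simp
  finally have "Qf w (D s) (D s) = 0" unfolding E_def Qf_def .
  then show "D s = 0" using Qf_pos[OF w, of "D s"] by (metis less_irrefl)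
qed

lemma hamvf_diff: "hamvf w (a - b) = hamvf w a - hamvf w b"
  by (simp add: hamvf_eq prod_eq_iff vec_eq_iff algebra_simps)

lemma flow_eq:
  assumes w: "\<forall>j. w $ j > 0"
  shows "flow w = Phi w"
  unfolding flow_def
proof (rule the_equality)
  show "\<forall>z. Phi w 0 z = z \<and> (\<forall>t. ((\<lambda>s. Phi w s z) has_vector_derivative hamvf w (Phi w t z)) (at t))"
    using Phi_0 Phi_deriv[OF w] by blast
next
  fix Psi assume h: "\<forall>z. Psi 0 z = z \<and> (\<forall>t. ((\<lambda>s. Psi s z) has_vector_derivative hamvf w (Psi t z)) (at t))"
  show "Psi = Phi w"
  proof (intro ext)
    fix s z
    define D where "D = (\<lambda>s. Psi s z - Phi w s z)"
    have "D s = 0"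
    proof (rule ode_unique[OF w])
      have "Psi 0 z = z" using h by blast
      then show "D 0 = 0" by (simp add: D_def Phi_0)
      fix t
      show "(D has_vector_derivative hamvf w (D t)) (at t)"
        unfolding D_def hamvf_diff
        by (intro has_vector_derivative_diff Phi_deriv[OF w]) (use h in blast)
    qed
    then show "Psi s z = Phi w s z" by (simp add: D_def)
  qed
qed

lemma Phi_linear: "linear (Phi w t)"
  by (rule linearI) (simp_all add: Phi_def prod_eq_iff vec_eq_iff algebra_simps add_divide_distrib)

lemma Mz_eq:
  assumes w: "\<forall>j. w $ j > 0"
  shows "Mz w z t = Phi w t"
  unfolding Mz_def flow_eq[OF w]
proof (rule the_equality)
  show "(Phi w t has_derivative Phi w t) (at z)" by (rule linear_imp_has_derivative[OF Phi_linear])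
  fix L assume "(Phi w t has_derivative L) (at z)"
  then show "L = Phi w t" using linear_imp_has_derivative[OF Phi_linear] has_derivative_unique by blast
qed



definition Vsub :: "('n::finite \<Rightarrow> bool) \<Rightarrow> 'n phase set" where
  "Vsub P = {z. \<forall>j. \<not> P j \<longrightarrow> fst z $ j = 0 \<and> snd z $ j = 0}"

lemma subspace_Vsub: "subspace (Vsub P)"
  unfolding subspace_def Vsub_def by auto

lemma Phi_comp1: "fst (Phi w t v) $ j = fst v $ j * cos (w$j * t) + snd v $ j * sin (w$j * t) / w$j"
  by (simp add: Phi_def)
lemma Phi_comp2: "snd (Phi w t v) $ j = - (w$j * fst v $ j * sin (w$j * t)) + snd v $ j * cos (w$j * t)"
  by (simp add: Phi_def)

lemma kernel_comp:
  assumes a: "w $ j > 0" and c: "cos (w$j * T) \<noteq> 1"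
    and e1: "fst (Phi w T v - v) $ j = 0" and e2: "snd (Phi w T v - v) $ j = 0"
  shows "fst v $ j = 0 \<and> snd v $ j = 0"
proof -
  define C where "C = cos (w$j * T)"
  define S where "S = sin (w$j * T)"
  define x where "x = fst v $ j"
  define y where "y = snd v $ j"
  define A where "A = w $ j"
  have A: "A > 0" using a by (simp add: A_def)
  have E1: "A * (C - 1) * x + S * y = 0"
  proof -
    have "x * C + y * S / A - x = 0" using e1 by (simp add: Phi_comp1 C_def S_def x_def y_def A_def)
    then have "y * S / A = x - x * C" by linarith
    then have "y * S = (x - x * C) * A" using A by (simp add: divide_eq_eq)
    then show ?thesis by (simp add: algebra_simps)
  qed
  have E2: "- (A * x * S) + (C - 1) * y = 0"
    using e2 by (simp add: Phi_comp2 C_def S_def x_def y_def A_def algebra_simps)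
  have SC: "S^2 + C^2 = 1" by (simp add: S_def C_def)
  have C1: "C \<noteq> 1" using c by (simp add: C_def)
  have pos: "(C - 1)^2 + S^2 > 0" using C1
    by (metis add_pos_nonneg diff_self eq_iff_diff_eq_0 power2_less_0 zero_less_power2 not_less zero_le_power2)
  have "A * x * ((C - 1)^2 + S^2) = (C - 1) * (A * (C - 1) * x + S * y) - S * (- (A * x * S) + (C - 1) * y)"
    by (simp add: algebra_simps power2_eq_square)
  also have "\<dots> = 0" using E1 E2 by simp
  finally have "x = 0" using A pos C1 by simp
  then have "(C - 1) * y = 0" using E2 by simp
  then have "y = 0" using C1 by simp
  then show ?thesis using \<open>x = 0\<close> by (simp add: x_def y_def)
qed

lemma funpow_kernel_comp:
  assumes a: "w $ j > 0" and c: "cos (w$j * T) \<noteq> 1"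
  shows "fst (((\<lambda>u. Phi w T u - u) ^^ k) v) $ j = 0 \<and> snd (((\<lambda>u. Phi w T u - u) ^^ k) v) $ j = 0
     \<Longrightarrow> fst v $ j = 0 \<and> snd v $ j = 0"
proof (induction k arbitrary: v)
  case 0 then show ?case by simp
next
  case (Suc k)
  have "fst (((\<lambda>u. Phi w T u - u) ^^ k) (Phi w T v - v)) $ j = 0 \<and> snd (((\<lambda>u. Phi w T u - u) ^^ k) (Phi w T v - v)) $ j = 0"
    using Suc.prems by (simp only: funpow_Suc_right o_apply)
  then have "fst (Phi w T v - v) $ j = 0 \<and> snd (Phi w T v - v) $ j = 0" using Suc.IH by blast
  then show ?case using kernel_comp[OF a c] by blast
qed

lemma fixed_in_Vsub:
  assumes w: "\<forall>j. w $ j > 0" and "Phi w T v = v"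
  shows "v \<in> Vsub (\<lambda>j. cos (w$j * T) = 1)"
  unfolding Vsub_def using kernel_comp[of w _ T v] w assms(2) by auto

lemma Vsub_fixed:
  assumes "v \<in> Vsub (\<lambda>j. cos (w$j * T) = 1)"
  shows "Phi w T v = v"
proof -
  have "fst (Phi w T v) $ j = fst v $ j \<and> snd (Phi w T v) $ j = snd v $ j" for j
  proof (cases "cos (w$j * T) = 1")
    case True
    then have "sin (w$j * T) = 0" using sin_cos_squared_add[of "w$j * T"] by simp
    then show ?thesis using True by (simp add: Phi_comp1 Phi_comp2)
  next
    case False
    then show ?thesis using assms by (simp add: Phi_comp1 Phi_comp2 Vsub_def)
  qed
  then show ?thesis by (simp add: prod_eq_iff vec_eq_iff)
qed

lemma E1_eq:
  assumes w: "\<forall>j. w $ j > 0"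
  shows "E1 w T z = Vsub (\<lambda>j. cos (w$j * T) = 1)"
proof -
  let ?N = "\<lambda>u. Phi w T u - u"
  let ?U = "\<Union>k\<in>{1::nat..}. {v. (?N ^^ k) v = 0}"
  have E: "E1 w T z = span ?U" unfolding E1_def Mz_eq[OF w] by simp
  have "?U \<subseteq> Vsub (\<lambda>j. cos (w$j * T) = 1)"
  proof
    fix v assume "v \<in> ?U"
    then obtain k where "(?N ^^ k) v = 0" by blast
    then show "v \<in> Vsub (\<lambda>j. cos (w$j * T) = 1)"
      unfolding Vsub_def using funpow_kernel_comp[of w _ T k v] w by auto
  qed
  then have "span ?U \<subseteq> Vsub (\<lambda>j. cos (w$j * T) = 1)"
    by (intro span_minimal subspace_Vsub)
  moreover have "Vsub (\<lambda>j. cos (w$j * T) = 1) \<subseteq> span ?U"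
  proof
    fix v assume "v \<in> Vsub (\<lambda>j. cos (w$j * T) = 1)"
    then have "(?N ^^ 1) v = 0" using Vsub_fixed by simp
    then have "v \<in> ?U" by blast
    then show "v \<in> span ?U" by (rule span_base)
  qed
  ultimately show ?thesis using E by blast
qed



lemma omega_eq: "omega u v = fst u \<bullet> snd v - snd u \<bullet> fst v"
  by (simp add: omega_def Jmap_def inner_prod_def)

lemma omega_diff_right: "omega u (a - b) = omega u a - omega u b"
  by (simp add: omega_eq inner_diff_right)

definition Lmap :: "real^'n::finite \<Rightarrow> 'n phase \<Rightarrow> 'n phase" where
  "Lmap w u = (- snd u, \<chi> j. (w$j)^2 * fst u $ j)"

lemma Qf_omega: "Qf w u v = omega u (Lmap w v)"
  unfolding omega_eq Lmap_def Qf_def inner_vec_def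
  by (simp add: sum.distrib sum_negf algebra_simps)

lemma Lmap_linear: "Lmap w (a *\<^sub>R u) = a *\<^sub>R Lmap w u"
  by (simp add: Lmap_def prod_eq_iff vec_eq_iff algebra_simps)

lemma Gmax_linear: "g \<in> Gmax w \<Longrightarrow> linear g"
  by (simp add: Gmax_def Sp_def)

lemma Gmax_omega: "g \<in> Gmax w \<Longrightarrow> omega (g u) (g v) = omega u v"
  unfolding Gmax_def Sp_def by blast

lemma Gmax_Q:
  assumes g: "g \<in> Gmax w"
  shows "Qf w (g u) (g v) = Qf w u v"
proof -
  have lin: "linear g" using Gmax_linear[OF g] .
  have H: "Hw w (g z) = Hw w z" for z using g unfolding Gmax_def by blast
  have Q: "Qf w (g z) (g z) = Qf w z z" for z using H[of z] by (simp add: Hw_Qf)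
  have "Qf w (g (u + v)) (g (u + v)) = Qf w (u + v) (u + v)" by (rule Q)
  then have "Qf w (g u) (g u) + 2 * Qf w (g u) (g v) + Qf w (g v) (g v) = Qf w u u + 2 * Qf w u v + Qf w v v"
    by (simp add: linear_add[OF lin] Qf_add_left Qf_add_right Qf_sym[of w v u] Qf_sym[of w "g v" "g u"])
  then show ?thesis using Q[of u] Q[of v] by simp
qed

lemma Gmax_surj:
  assumes g: "g \<in> Gmax w"
  shows "surj g"
proof -
  have lin: "linear g" using Gmax_linear[OF g] .
  have "inj g"
    unfolding linear_inj_iff_eq_0[OF lin]
  proof (intro allI impI)
    fix u assume gu: "g u = 0"
    have "omega u (- snd u, fst u) = omega (g u) (g (- snd u, fst u))" using Gmax_omega[OF g] by simp
    also have "\<dots> = 0" by (simp add: gu omega_def)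
    finally have "u \<bullet> u = 0" by (simp add: omega_def Jmap_def)
    then show "u = 0" by simp
  qed
  then show ?thesis using linear_inj_imp_surj[OF lin] by blast
qed

lemma Gmax_commute:
  assumes g: "g \<in> Gmax w"
  shows "Lmap w (g v) = g (Lmap w v)"
proof -
  define d where "d = Lmap w (g v) - g (Lmap w v)"
  have "omega (g u) d = 0" for u
  proof -
    have "omega (g u) (Lmap w (g v)) = Qf w (g u) (g v)" by (simp add: Qf_omega)
    also have "\<dots> = Qf w u v" by (rule Gmax_Q[OF g])
    also have "\<dots> = omega u (Lmap w v)" by (simp add: Qf_omega)
    also have "\<dots> = omega (g u) (g (Lmap w v))" using Gmax_omega[OF g] by simp
    finally show ?thesis by (simp add: d_def omega_diff_right)
  qed
  moreover obtain u where "g u = Jmap d" using Gmax_surj[OF g] by (metis surjD)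
  ultimately have "Jmap d \<bullet> Jmap d = 0" by (metis omega_def)
  then have "Jmap d = 0" by simp
  then have "d = 0" by (simp add: Jmap_def prod_eq_iff)
  then show ?thesis by (simp add: d_def)
qed

lemma Gmax_Vsub:
  assumes w: "\<forall>j. w $ j > 0" and c: "c > 0" and g: "g \<in> Gmax w"
    and v: "v \<in> Vsub (\<lambda>j. w$j = c)"
  shows "g v \<in> Vsub (\<lambda>j. w$j = c)"
proof -
  have lin: "linear g" using Gmax_linear[OF g] .
  have LL: "Lmap w (Lmap w u) = ((\<chi> j. - ((w$j)^2 * fst u $ j)), (\<chi> j. - ((w$j)^2 * snd u $ j)))" for u
    by (simp add: Lmap_def vec_eq_iff)
  have "Lmap w (Lmap w v) = (- (c^2)) *\<^sub>R v"
    using v by (auto simp: LL Vsub_def prod_eq_iff vec_eq_iff)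
  then have "Lmap w (Lmap w (g v)) = (- (c^2)) *\<^sub>R g v"
    by (simp add: Gmax_commute[OF g] linear_scale[OF lin] linear_neg[OF lin])
  then have eq: "(w$j)^2 * fst (g v) $ j = c^2 * fst (g v) $ j \<and> (w$j)^2 * snd (g v) $ j = c^2 * snd (g v) $ j" for j
    by (auto simp: LL prod_eq_iff vec_eq_iff dest: spec[of _ j])
  have "fst (g v) $ j = 0 \<and> snd (g v) $ j = 0" if "w$j \<noteq> c" for j
  proof -
    have "(w$j)^2 \<noteq> c^2" using that w c by (metis less_eq_real_def power2_eq_iff_nonneg)
    then show ?thesis using eq[of j] by auto
  qed
  then show ?thesis by (simp add: Vsub_def)
qed



lemma funpow_scale:
  fixes A :: "'a::real_vector \<Rightarrow> 'a"
  assumes A: "linear A"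
  shows "((\<lambda>u. t *\<^sub>R A u) ^^ k) v = (t ^ k) *\<^sub>R (A ^^ k) v"
proof (induction k)
  case 0 show ?case by simp
next
  case (Suc k) then show ?case by (simp add: linear_scale[OF A])
qed

lemma funpow_bound:
  fixes A :: "'a::euclidean_space \<Rightarrow> 'a"
  assumes A: "linear A" and K: "\<And>x. norm (A x) \<le> K * norm x" and K0: "K > 0"
  shows "norm ((A ^^ k) z) \<le> K ^ k * norm z"
proof (induction k)
  case 0 then show ?case by simp
next
  case (Suc k)
  have "norm ((A ^^ Suc k) z) = norm (A ((A ^^ k) z))" by simp
  also have "\<dots> \<le> K * norm ((A ^^ k) z)" by (rule K)
  also have "\<dots> \<le> K * (K ^ k * norm z)" using Suc.IH K0 by (simp add: mult_left_mono)
  finally show ?case by simp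
qed

lemma lin_exp_summable:
  fixes A :: "'a::euclidean_space \<Rightarrow> 'a"
  assumes A: "linear A"
  shows "summable (\<lambda>k. (1 / fact k) *\<^sub>R (((\<lambda>u. t *\<^sub>R A u) ^^ k) z))"
proof -
  obtain K where K0: "K > 0" and K: "\<And>x. norm (A x) \<le> K * norm x"
    using linear_bounded_pos[OF A] by blast
  have s: "summable (\<lambda>k. (inverse (fact k) * (\<bar>t\<bar> * K) ^ k) * norm z)"
    by (intro summable_mult2 summable_exp)
  show ?thesis
  proof (rule summable_comparison_test'[OF s])
    fix k :: nat
    have "norm ((1 / fact k) *\<^sub>R (((\<lambda>u. t *\<^sub>R A u) ^^ k) z)) = inverse (fact k) * \<bar>t\<bar> ^ k * norm ((A ^^ k) z)"
      by (simp add: funpow_scale[OF A] power_abs divide_inverse abs_mult)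
    also have "\<dots> \<le> inverse (fact k) * \<bar>t\<bar> ^ k * (K ^ k * norm z)"
      by (intro mult_left_mono funpow_bound[OF A K K0]) auto
    also have "\<dots> = (inverse (fact k) * (\<bar>t\<bar> * K) ^ k) * norm z"
      by (simp add: power_mult_distrib)
    finally show "norm ((1 / fact k) *\<^sub>R (((\<lambda>u. t *\<^sub>R A u) ^^ k) z)) \<le> (inverse (fact k) * (\<bar>t\<bar> * K) ^ k) * norm z" .
  qed
qed

lemma lin_exp_real_series:
  fixes A :: "'a::euclidean_space \<Rightarrow> 'a"
  assumes A: "linear A" and phi: "bounded_linear phi"
  shows "phi (lin_exp (\<lambda>u. t *\<^sub>R A u) z) = (\<Sum>k. (phi ((A ^^ k) z) / fact k) * t ^ k)"
    and "summable (\<lambda>k. (phi ((A ^^ k) z) / fact k) * t ^ k)"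
proof -
  have eq: "phi ((1 / fact k) *\<^sub>R (((\<lambda>u. t *\<^sub>R A u) ^^ k) z)) = (phi ((A ^^ k) z) / fact k) * t ^ k" for k
    by (simp add: funpow_scale[OF A] linear_scale[OF bounded_linear.linear[OF phi]])
  show "phi (lin_exp (\<lambda>u. t *\<^sub>R A u) z) = (\<Sum>k. (phi ((A ^^ k) z) / fact k) * t ^ k)"
    unfolding lin_exp_def bounded_linear.suminf[OF phi lin_exp_summable[OF A]] eq ..
  show "summable (\<lambda>k. (phi ((A ^^ k) z) / fact k) * t ^ k)"
    using bounded_linear.summable[OF phi lin_exp_summable[OF A, of t z]] unfolding eq .
qed

lemma lin_exp_deriv0:
  fixes A :: "'a::euclidean_space \<Rightarrow> 'a"
  assumes A: "linear A" and phi: "bounded_linear phi"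
  shows "((\<lambda>t. phi (lin_exp (\<lambda>u. t *\<^sub>R A u) z)) has_real_derivative phi (A z)) (at 0)"
proof -
  define c where "c = (\<lambda>k. phi ((A ^^ k) z) / fact k)"
  have f: "(\<lambda>t. phi (lin_exp (\<lambda>u. t *\<^sub>R A u) z)) = (\<lambda>t. \<Sum>k. c k * t ^ k)"
    using lin_exp_real_series(1)[OF A phi] by (simp add: c_def fun_eq_iff)
  have "((\<lambda>t. \<Sum>k. c k * t ^ k) has_real_derivative (\<Sum>k. diffs c k * 0 ^ k)) (at 0)"
    by (rule termdiffs_strong_converges_everywhere) (use lin_exp_real_series(2)[OF A phi] in \<open>simp add: c_def\<close>)
  moreover have "(\<Sum>k. diffs c k * 0 ^ k) = diffs c 0" by (rule powser_zero)
  moreover have "diffs c 0 = phi (A z)"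
    by (simp add: diffs_def c_def)
  ultimately show ?thesis unfolding f by simp
qed

lemma lin_exp_zero: "lin_exp (\<lambda>u. 0) z = z"
proof -
  have "(\<lambda>k. (1 / fact k) *\<^sub>R (((\<lambda>u. 0) ^^ k) z)) = (\<lambda>k. if k = 0 then z else 0)"
  proof
    fix k show "(1 / fact k) *\<^sub>R (((\<lambda>u. 0) ^^ k) z) = (if k = 0 then z else 0)"
      by (cases k) simp_all
  qed
  moreover have "(\<lambda>k::nat. if k = 0 then z else 0) sums z" using sums_single[of 0 "\<lambda>_. z"] by simp
  ultimately show ?thesis unfolding lin_exp_def by (simp add: sums_iff)
qed

lemma lie_alg_linear: "A \<in> lie_alg G \<Longrightarrow> linear A"
  by (simp add: lie_alg_def)

lemma lie_alg_Gmax: "A \<in> lie_alg G \<Longrightarrow> lin_exp (\<lambda>u. t *\<^sub>R A u) \<in> G"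
  by (simp add: lie_alg_def)

lemma bl_fst_nth: "bounded_linear (\<lambda>x::'n::finite phase. fst x $ i)"
  by (intro bounded_linear_compose[OF bounded_linear_vec_nth] bounded_linear_fst)
lemma bl_snd_nth: "bounded_linear (\<lambda>x::'n::finite phase. snd x $ i)"
  by (intro bounded_linear_compose[OF bounded_linear_vec_nth] bounded_linear_snd)

lemma lie_alg_upper:
  assumes w: "\<forall>j. w $ j > 0" and c: "c > 0" and z: "z \<in> Vsub (\<lambda>j. w$j = c)"
    and A: "A \<in> lie_alg (Gmax w)"
  shows "A z \<in> Vsub (\<lambda>j. w$j = c)" and "Qf w z (A z) = 0"
proof -
  have lin: "linear A" using lie_alg_linear[OF A] .
  define f where "f = (\<lambda>t. lin_exp (\<lambda>u. t *\<^sub>R A u) z)"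
  have fV: "f t \<in> Vsub (\<lambda>j. w$j = c)" for t
    unfolding f_def using Gmax_Vsub[OF w c lie_alg_Gmax[OF A] z] by simp
  have f0: "f 0 = z" by (simp add: f_def lin_exp_zero)
  have d1: "((\<lambda>t. fst (f t) $ j) has_real_derivative fst (A z) $ j) (at 0)" for j
    unfolding f_def by (rule lin_exp_deriv0[OF lin bl_fst_nth])
  have d2: "((\<lambda>t. snd (f t) $ j) has_real_derivative snd (A z) $ j) (at 0)" for j
    unfolding f_def by (rule lin_exp_deriv0[OF lin bl_snd_nth])
  show "A z \<in> Vsub (\<lambda>j. w$j = c)"
    unfolding Vsub_def
  proof (intro CollectI allI impI)
    fix j assume j: "w $ j \<noteq> c"
    have "(\<lambda>t. fst (f t) $ j) = (\<lambda>t. 0)" "(\<lambda>t. snd (f t) $ j) = (\<lambda>t. 0)"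
      using fV j by (auto simp: Vsub_def)
    then have "((\<lambda>t. 0) has_real_derivative fst (A z) $ j) (at 0)" "((\<lambda>t. 0) has_real_derivative snd (A z) $ j) (at 0)"
      using d1[of j] d2[of j] by simp_all
    then show "fst (A z) $ j = 0 \<and> snd (A z) $ j = 0"
      using DERIV_unique DERIV_const by metis
  qed
  have Qc: "Qf w (f t) (f t) = Qf w z z" for t
    unfolding f_def using Gmax_Q[OF lie_alg_Gmax[OF A], where u=z and v=z] by simp
  have "((\<lambda>t. Qf w (f t) (f t)) has_real_derivative 
      (\<Sum>j\<in>UNIV. (w$j)^2 * (fst (A z) $ j * fst (f 0) $ j + fst (A z) $ j * fst (f 0) $ j)
         + (snd (A z) $ j * snd (f 0) $ j + snd (A z) $ j * snd (f 0) $ j))) (at 0)"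
    unfolding Qf_def by (intro DERIV_sum DERIV_add DERIV_cmult DERIV_mult d1 d2)
  moreover have "(\<Sum>j\<in>UNIV. (w$j)^2 * (fst (A z) $ j * fst (f 0) $ j + fst (A z) $ j * fst (f 0) $ j)
         + (snd (A z) $ j * snd (f 0) $ j + snd (A z) $ j * snd (f 0) $ j)) = 2 * Qf w z (A z)"
    unfolding f0 Qf_def by (simp add: sum_distrib_left algebra_simps)
  ultimately have "((\<lambda>t. Qf w z z) has_real_derivative 2 * Qf w z (A z)) (at 0)"
    unfolding Qc by simp
  then show "Qf w z (A z) = 0" using DERIV_unique DERIV_const by fastforce
qed



definition Imap :: "real^'n::finite \<Rightarrow> 'n phase \<Rightarrow> 'n phase" where
  "Imap w u = ((\<chi> j. snd u $ j / w$j), (\<chi> j. - (w$j * fst u $ j)))"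

lemma Imap_add: "Imap w (a + b) = Imap w a + Imap w b"
  by (simp add: Imap_def prod_eq_iff vec_eq_iff algebra_simps add_divide_distrib)
lemma Imap_scale: "Imap w (r *\<^sub>R a) = r *\<^sub>R Imap w a"
  by (simp add: Imap_def prod_eq_iff vec_eq_iff algebra_simps)
lemma Imap_diff: "Imap w (a - b) = Imap w a - Imap w b"
  by (simp add: Imap_def prod_eq_iff vec_eq_iff algebra_simps diff_divide_distrib)
lemma Imap_linear: "linear (Imap w)"
  by (rule linearI) (simp_all add: Imap_add Imap_scale)

context
  fixes w :: "real^'n::finite"
  assumes w: "\<forall>j. w $ j > 0"
begin

lemma wnz: "w $ j \<noteq> 0" using w by (metis less_irrefl)

lemma Imap_Imap: "Imap w (Imap w a) = - a"
  using wnz by (simp add: Imap_def prod_eq_iff vec_eq_iff)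

lemma Qf_Imap_Imap: "Qf w (Imap w a) (Imap w b) = Qf w a b"
  unfolding Qf_def Imap_def using wnz
  by (intro sum.cong refl) (simp add: field_simps power2_eq_square)

lemma Qf_Imap_skew: "Qf w a (Imap w b) = - Qf w (Imap w a) b"
proof -
  have "Qf w a (Imap w b) = (\<Sum>j\<in>UNIV. w$j * (fst a $ j * snd b $ j) - w$j * (snd a $ j * fst b $ j))"
    unfolding Qf_def Imap_def using wnz by (intro sum.cong refl) (simp add: field_simps power2_eq_square)
  moreover have "Qf w (Imap w a) b = (\<Sum>j\<in>UNIV. w$j * (snd a $ j * fst b $ j) - w$j * (fst a $ j * snd b $ j))"
    unfolding Qf_def Imap_def using wnz by (intro sum.cong refl) (simp add: field_simps power2_eq_square)
  ultimately show ?thesis by (simp add: sum_negf[symmetric] algebra_simps)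
qed

lemma Qf_Imap_self: "Qf w (Imap w a) a = 0"
  using Qf_Imap_skew[of a a] Qf_sym[of w a "Imap w a"] by simp

lemma Imap_Vsub: "a \<in> Vsub (\<lambda>j. w$j = c) \<Longrightarrow> Imap w a \<in> Vsub (\<lambda>j. w$j = c)"
  by (simp add: Vsub_def Imap_def)

lemma hamvf_Imap:
  assumes "z \<in> Vsub (\<lambda>j. w$j = c)"
  shows "hamvf w z = c *\<^sub>R Imap w z"
proof -
  have "fst (hamvf w z) $ j = fst (c *\<^sub>R Imap w z) $ j \<and> snd (hamvf w z) $ j = snd (c *\<^sub>R Imap w z) $ j" for j
  proof (cases "w $ j = c")
    case True then show ?thesis using wnz[of j] by (simp add: hamvf_eq Imap_def power2_eq_square)
  next
    case False then show ?thesis using assms by (simp add: hamvf_eq Imap_def Vsub_def)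
  qed
  then show ?thesis by (simp add: prod_eq_iff vec_eq_iff)
qed

lemma omega_Imap:
  assumes c: "c > 0" and a: "a \<in> Vsub (\<lambda>j. w$j = c)"
  shows "omega a y = - Qf w (Imap w a) y / c"
proof -
  have "Qf w (Imap w a) y = (\<Sum>j\<in>UNIV. c * (snd a $ j * fst y $ j) - c * (fst a $ j * snd y $ j))"
    unfolding Qf_def Imap_def
  proof (intro sum.cong refl)
    fix j
    show "(w $ j)\<^sup>2 * (fst (\<chi> j. snd a $ j / w $ j, \<chi> j. - (w $ j * fst a $ j)) $ j * fst y $ j) +
         snd (\<chi> j. snd a $ j / w $ j, \<chi> j. - (w $ j * fst a $ j)) $ j * snd y $ j =
         c * (snd a $ j * fst y $ j) - c * (fst a $ j * snd y $ j)"
    proof (cases "w $ j = c")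
      case True then show ?thesis using wnz[of j] by (simp add: field_simps power2_eq_square)
    next
      case False then show ?thesis using a by (simp add: Vsub_def)
    qed
  qed
  also have "\<dots> = c * (\<Sum>j\<in>UNIV. snd a $ j * fst y $ j) - c * (\<Sum>j\<in>UNIV. fst a $ j * snd y $ j)"
    by (simp add: sum_subtractf sum_distrib_left)
  also have "\<dots> = - c * omega a y"
    by (simp add: omega_eq inner_vec_def algebra_simps)
  finally show ?thesis using c by simp
qed

end

lemma omega_add_left: "omega (a + b) y = omega a y + omega b y"
  by (simp add: omega_eq inner_add_left)
lemma omega_scale_left: "omega (r *\<^sub>R a) y = r * omega a y"
  by (simp add: omega_eq right_diff_distrib)
lemma omega_add_right: "omega y (a + b) = omega y a + omega y b"
  by (simp add: omega_eq inner_add_right)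
lemma omega_scale_right: "omega y (r *\<^sub>R a) = r * omega y a"
  by (simp add: omega_eq right_diff_distrib)
lemma omega_antisym: "omega a b = - omega b a"
  by (simp add: omega_eq inner_commute)


lemma rot_preserves:
  fixes beta :: "'a::real_vector \<Rightarrow> 'a \<Rightarrow> real" and B :: "'a \<Rightarrow> 'a"
  assumes addl: "\<And>a b y. beta (a + b) y = beta a y + beta b y"
    and scl: "\<And>r a y. beta (r *\<^sub>R a) y = r * beta a y"
    and addr: "\<And>a b y. beta y (a + b) = beta y a + beta y b"
    and scr: "\<And>r a y. beta y (r *\<^sub>R a) = r * beta y a"
    and skew: "\<And>a y. beta (B a) y = - beta a (B y)"
    and B3: "\<And>a. B (B (B a)) = - B a"
    and sc: "s^2 + c^2 = 1"
  shows "beta (u + s *\<^sub>R B u + (1 - c) *\<^sub>R B (B u)) (v + s *\<^sub>R B v + (1 - c) *\<^sub>R B (B v)) = beta u v"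
proof -
  have neg: "beta y (- a) = - beta y a" for y a
  proof -
    have "beta y (- a) = beta y ((-1) *\<^sub>R a)" by simp
    also have "\<dots> = (-1) * beta y a" by (rule scr)
    finally show ?thesis by simp
  qed
  have r1: "beta (B u) v = - beta u (B v)" by (rule skew)
  have r2: "beta (B (B u)) v = beta u (B (B v))" using skew[of "B u" v] skew[of u "B v"] by simp
  have r3: "beta (B u) (B v) = - beta u (B (B v))" by (rule skew)
  have r4: "beta (B (B u)) (B v) = - beta u (B v)"
    using skew[of "B u" "B v"] skew[of u "B (B v)"] B3[of v] neg by simp
  have r5: "beta (B u) (B (B v)) = beta u (B v)"
    using skew[of u "B (B v)"] B3[of v] neg by simp
  have r6: "beta (B (B u)) (B (B v)) = - beta u (B (B v))"
    using skew[of "B u" "B (B v)"] skew[of u "B v"] B3[of v] neg scr by simp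
  define r where "r = 1 - c"
  have "beta (u + s *\<^sub>R B u + r *\<^sub>R B (B u)) (v + s *\<^sub>R B v + r *\<^sub>R B (B v))
     = beta u v + s * beta u (B v) + r * beta u (B (B v)) + s * beta (B u) v + s * (s * beta (B u) (B v))
       + s * (r * beta (B u) (B (B v))) + r * beta (B (B u)) v + r * (s * beta (B (B u)) (B v))
       + r * (r * beta (B (B u)) (B (B v)))"
    by (simp only: addl addr scl scr) (simp add: algebra_simps)
  also have "\<dots> = beta u v + beta u (B (B v)) * (2 * r - s^2 - r^2)"
    unfolding r1 r2 r3 r4 r5 r6 by (simp add: algebra_simps power2_eq_square)
  also have "2 * r - s^2 - r^2 = 0" using sc by (simp add: r_def algebra_simps power2_eq_square)
  finally show ?thesis by (simp add: r_def)
qed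



lemma Bpow:
  fixes B :: "'a::real_vector \<Rightarrow> 'a"
  assumes B: "linear B" and B3: "\<And>a. B (B (B a)) = - B a"
  shows "k \<ge> 1 \<Longrightarrow> (B ^^ k) y = (if odd k then ((-1) ^ ((k - 1) div 2)) *\<^sub>R B y
                               else (- ((-1) ^ (k div 2))) *\<^sub>R B (B y))"
proof (induction k)
  case 0 then show ?case by simp
next
  case (Suc k)
  show ?case
  proof (cases "k = 0")
    case True then show ?thesis by simp
  next
    case False
    then have IH: "(B ^^ k) y = (if odd k then ((-1) ^ ((k - 1) div 2)) *\<^sub>R B y
                               else (- ((-1) ^ (k div 2))) *\<^sub>R B (B y))" using Suc.IH by simp
    have "(B ^^ Suc k) y = B ((B ^^ k) y)" by simp
    show ?thesis
    proof (cases "odd k")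
      case True
      then obtain m where m: "k = 2 * m + 1" by (metis oddE)
      have "(B ^^ Suc k) y = ((-1) ^ m) *\<^sub>R B (B y)"
        using IH m by (simp add: linear_scale[OF B])
      moreover have "Suc k = 2 * (m + 1)" using m by simp
      ultimately show ?thesis using m by simp
    next
      case False
      then obtain m where m: "k = 2 * m" by (metis evenE)
      have "(B ^^ Suc k) y = (- ((-1) ^ m)) *\<^sub>R B (B (B y))"
        using IH m False by (simp add: linear_scale[OF B] linear_neg[OF B])
      also have "\<dots> = ((-1) ^ m) *\<^sub>R B y" by (simp add: B3)
      finally show ?thesis using m by simp
    qed
  qed
qed

lemma lin_exp_rot:
  fixes B :: "'a::real_normed_vector \<Rightarrow> 'a"
  assumes B: "linear B" and B3: "\<And>a. B (B (B a)) = - B a"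
  shows "lin_exp (\<lambda>u. t *\<^sub>R B u) y = y + sin t *\<^sub>R B y + (1 - cos t) *\<^sub>R B (B y)"
proof -
  have trm: "(1 / fact k) *\<^sub>R (((\<lambda>u. t *\<^sub>R B u) ^^ k) y) =
     (if k = 0 then y else 0) + (sin_coeff k * t ^ k) *\<^sub>R B y
     + ((if k = 0 then 1 else 0) - cos_coeff k * t ^ k) *\<^sub>R B (B y)" for k
  proof (cases "k = 0")
    case True then show ?thesis by (simp add: sin_coeff_def cos_coeff_def)
  next
    case False
    then have k1: "k \<ge> 1" by simp
    have "((\<lambda>u. t *\<^sub>R B u) ^^ k) y = (t ^ k) *\<^sub>R (B ^^ k) y" by (rule funpow_scale[OF B])
    then show ?thesis using False Bpow[OF B B3 k1, of y]
      by (cases "odd k") (simp_all add: sin_coeff_def cos_coeff_def divide_inverse algebra_simps)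
  qed
  have s1: "(\<lambda>k::nat. if k = 0 then y else 0) sums y" using sums_single[of 0 "\<lambda>_. y"] by simp
  have s2: "(\<lambda>k. (sin_coeff k * t ^ k) *\<^sub>R B y) sums (sin t *\<^sub>R B y)"
    using sums_scaleR_left[OF sin_converges[of t]] by simp
  have s0: "(\<lambda>k::nat. if k = 0 then (1::real) else 0) sums 1" using sums_single[of 0 "\<lambda>_. (1::real)"] by simp
  have s3: "(\<lambda>k. ((if k = 0 then 1 else 0) - cos_coeff k * t ^ k) *\<^sub>R B (B y)) sums ((1 - cos t) *\<^sub>R B (B y))"
    using sums_scaleR_left[OF sums_diff[OF s0 cos_converges[of t]]] by simp
  have "(\<lambda>k. (1 / fact k) *\<^sub>R (((\<lambda>u. t *\<^sub>R B u) ^^ k) y)) sums (y + sin t *\<^sub>R B y + (1 - cos t) *\<^sub>R B (B y))"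
    unfolding trm by (intro sums_add s1 s2 s3)
  then show ?thesis unfolding lin_exp_def by (simp add: sums_iff)
qed

definition Bmap :: "real^'n::finite \<Rightarrow> 'n phase \<Rightarrow> 'n phase \<Rightarrow> 'n phase \<Rightarrow> 'n phase" where
  "Bmap w z v u = Qf w z u *\<^sub>R v + Qf w (Imap w z) u *\<^sub>R Imap w v
     - Qf w v u *\<^sub>R z - Qf w (Imap w v) u *\<^sub>R Imap w z"

lemma Bmap_linear: "linear (Bmap w z v)"
  by (rule linearI) (simp_all add: Bmap_def Qf_lin algebra_simps)

lemma omega_diff_left: "omega (a - b) y = omega a y - omega b y"
  by (simp add: omega_eq inner_diff_left)

context
  fixes w :: "real^'n::finite" and z v :: "'n phase" and c :: real
  assumes w: "\<forall>j. w $ j > 0" and c: "c > 0"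
    and zV: "z \<in> Vsub (\<lambda>j. w$j = c)" and vV: "v \<in> Vsub (\<lambda>j. w$j = c)"
    and zz: "Qf w z z = 1" and vv: "Qf w v v = 1" and zv: "Qf w z v = 0"
    and Izv: "Qf w (Imap w z) v = 0"
begin

lemma facts:
  "Qf w v z = 0" "Qf w (Imap w z) z = 0" "Qf w (Imap w v) v = 0" "Qf w (Imap w v) z = 0"
  "Qf w (Imap w z) (Imap w z) = 1" "Qf w (Imap w v) (Imap w v) = 1" "Qf w (Imap w v) (Imap w z) = 0"
  "Qf w z (Imap w z) = 0" "Qf w v (Imap w z) = 0" "Qf w z (Imap w v) = 0" "Qf w v (Imap w v) = 0"
  "Qf w (Imap w z) (Imap w v) = 0"
  using zv Izv zz vv Qf_sym[of w] Qf_Imap_self[OF w] Qf_Imap_Imap[OF w] Qf_Imap_skew[OF w]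
  by metis+

lemma Bz: "Bmap w z v z = v"
  using facts zz zv by (simp add: Bmap_def)
lemma BIz: "Bmap w z v (Imap w z) = Imap w v"
  using facts zz zv Izv by (simp add: Bmap_def)
lemma Bv: "Bmap w z v v = - z"
  using facts zz zv vv Izv by (simp add: Bmap_def)
lemma BIv: "Bmap w z v (Imap w v) = - Imap w z"
  using facts zz zv vv Izv by (simp add: Bmap_def)

lemma BB: "Bmap w z v (Bmap w z v u) = - (Qf w z u *\<^sub>R z) - Qf w (Imap w z) u *\<^sub>R Imap w z
     - Qf w v u *\<^sub>R v - Qf w (Imap w v) u *\<^sub>R Imap w v"
proof -
  have lin: "linear (Bmap w z v)" by (rule Bmap_linear)
  have "Bmap w z v (Bmap w z v u) = Qf w z u *\<^sub>R Bmap w z v v + Qf w (Imap w z) u *\<^sub>R Bmap w z v (Imap w v)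
     - Qf w v u *\<^sub>R Bmap w z v z - Qf w (Imap w v) u *\<^sub>R Bmap w z v (Imap w z)"
    by (subst (2) Bmap_def) (simp add: linear_add[OF lin] linear_diff[OF lin] linear_scale[OF lin])
  then show ?thesis by (simp add: Bz BIz Bv BIv algebra_simps)
qed

lemma BBB: "Bmap w z v (Bmap w z v (Bmap w z v u)) = - Bmap w z v u"
proof -
  have lin: "linear (Bmap w z v)" by (rule Bmap_linear)
  show ?thesis
    unfolding BB by (simp add: linear_add[OF lin] linear_diff[OF lin] linear_scale[OF lin] linear_neg[OF lin]
        Bz BIz Bv BIv Bmap_def Qf_lin facts zz vv zv Izv algebra_simps)
qed

lemma BQskew: "Qf w (Bmap w z v a) y = - Qf w a (Bmap w z v y)"
  by (simp add: Bmap_def Qf_lin algebra_simps Qf_sym[of w _ a] Qf_sym[of w y])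

lemma Bomega_form: "omega (Bmap w z v a) y = (- Qf w z a * Qf w (Imap w v) y + Qf w (Imap w z) a * Qf w v y
     + Qf w v a * Qf w (Imap w z) y - Qf w (Imap w v) a * Qf w z y) / c"
proof -
  have IzV: "Imap w z \<in> Vsub (\<lambda>j. w$j = c)" by (rule Imap_Vsub[OF w zV])
  have IvV: "Imap w v \<in> Vsub (\<lambda>j. w$j = c)" by (rule Imap_Vsub[OF w vV])
  show ?thesis
    unfolding Bmap_def omega_diff_left omega_add_left omega_scale_left
      omega_Imap[OF w c zV] omega_Imap[OF w c vV] omega_Imap[OF w c IzV] omega_Imap[OF w c IvV]
    using c by (simp add: Imap_Imap[OF w] Qf_minus_left field_simps)
qed

lemma Bomega_skew: "omega (Bmap w z v a) y = - omega a (Bmap w z v y)"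
proof -
  have "omega (Bmap w z v a) y = omega (Bmap w z v y) a"
    unfolding Bomega_form by (simp add: algebra_simps)
  then show ?thesis using omega_antisym[of a "Bmap w z v y"] by simp
qed

lemma B_lie: "Bmap w z v \<in> lie_alg (Gmax w)"
  unfolding lie_alg_def
proof (intro CollectI conjI allI)
  show lin: "linear (Bmap w z v)" by (rule Bmap_linear)
  fix t
  define g where "g = (\<lambda>y. y + sin t *\<^sub>R Bmap w z v y + (1 - cos t) *\<^sub>R Bmap w z v (Bmap w z v y))"
  have e: "lin_exp (\<lambda>u. t *\<^sub>R Bmap w z v u) = g"
    unfolding g_def by (rule ext, rule lin_exp_rot[OF lin BBB])
  have sc: "(sin t)^2 + (cos t)^2 = 1" by simp
  have glin: "linear g"
    unfolding g_def by (rule linearI) (simp_all add: linear_add[OF lin] linear_scale[OF lin] algebra_simps)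
  have gom: "omega (g a) (g b) = omega a b" for a b
    unfolding g_def
    by (rule rot_preserves[where beta=omega, OF omega_add_left omega_scale_left omega_add_right
          omega_scale_right Bomega_skew BBB sc])
  have gQ: "Qf w (g a) (g a) = Qf w a a" for a
    unfolding g_def
    by (rule rot_preserves[where beta="Qf w", OF Qf_add_left Qf_scale_left Qf_add_right
          Qf_scale_right BQskew BBB sc])
  have "g \<in> Gmax w"
    unfolding Gmax_def Sp_def using glin gom gQ by (simp add: Hw_Qf)
  then show "lin_exp (\<lambda>u. t *\<^sub>R Bmap w z v u) \<in> Gmax w" unfolding e .
qed

end



definition Rset :: "real^'n::finite \<Rightarrow> 'n phase \<Rightarrow> 'n phase set" where
  "Rset w z = {a *\<^sub>R hamvf w z + A z | a A. A \<in> lie_alg (Gmax w)}"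

definition Wset :: "real^'n::finite \<Rightarrow> real \<Rightarrow> 'n phase \<Rightarrow> 'n phase set" where
  "Wset w c z = {y \<in> Vsub (\<lambda>j. w$j = c). Qf w z y = 0}"

lemma zero_lie: "(\<lambda>u. 0) \<in> lie_alg (Gmax w)"
proof -
  have e: "lin_exp (\<lambda>u. t *\<^sub>R (0::'a::finite phase)) = id" for t
    by (simp add: fun_eq_iff lin_exp_zero)
  have "linear (id :: 'a phase \<Rightarrow> 'a phase)" by (simp add: linear_iff)
  then have "id \<in> Gmax w" by (simp add: Gmax_def Sp_def)
  moreover have "linear (\<lambda>u::'a phase. 0::'a phase)" by (simp add: linear_iff)
  ultimately show ?thesis unfolding lie_alg_def using e by simp
qed

lemma subspace_Wset: "subspace (Wset w c z)"
  using subspace_Vsub[of "\<lambda>j. w$j = c"]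
  unfolding subspace_def Wset_def by (auto simp: Qf_lin)

lemma R_sub_W:
  assumes w: "\<forall>j. w $ j > 0" and c: "c > 0" and z: "z \<in> Vsub (\<lambda>j. w$j = c)"
  shows "Rset w z \<subseteq> Wset w c z"
proof
  fix y assume "y \<in> Rset w z"
  then obtain a A where y: "y = a *\<^sub>R hamvf w z + A z" and A: "A \<in> lie_alg (Gmax w)"
    unfolding Rset_def by blast
  have h: "hamvf w z = c *\<^sub>R Imap w z" by (rule hamvf_Imap[OF w z])
  have hV: "hamvf w z \<in> Vsub (\<lambda>j. w$j = c)"
    unfolding h using subspace_Vsub Imap_Vsub[OF w z] by (metis subspace_scale)
  have hQ: "Qf w z (hamvf w z) = 0"
    unfolding h using Qf_Imap_self[OF w, of z] Qf_sym[of w z] by (simp add: Qf_lin)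
  have AV: "A z \<in> Vsub (\<lambda>j. w$j = c)" and AQ: "Qf w z (A z) = 0"
    using lie_alg_upper[OF w c z A] by auto
  have "y \<in> Vsub (\<lambda>j. w$j = c)"
    unfolding y using subspace_Vsub hV AV by (metis subspace_add subspace_scale)
  moreover have "Qf w z y = 0" unfolding y using hQ AQ by (simp add: Qf_lin)
  ultimately show "y \<in> Wset w c z" by (simp add: Wset_def)
qed

lemma W_sub_spanR:
  assumes w: "\<forall>j. w $ j > 0" and c: "c > 0" and z: "z \<in> Vsub (\<lambda>j. w$j = c)" and z0: "z \<noteq> 0"
  shows "Wset w c z \<subseteq> span (Rset w z)"
proof
  fix y assume "y \<in> Wset w c z"
  then have yV: "y \<in> Vsub (\<lambda>j. w$j = c)" and yQ: "Qf w z y = 0" by (auto simp: Wset_def)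
  define n where "n = Qf w z z"
  have n: "n > 0" unfolding n_def by (rule Qf_pos[OF w z0])
  have IzV: "Imap w z \<in> Vsub (\<lambda>j. w$j = c)" by (rule Imap_Vsub[OF w z])
  have hR: "hamvf w z \<in> span (Rset w z)"
  proof (rule span_base)
    have "\<exists>a A. hamvf w z = a *\<^sub>R hamvf w z + A z \<and> A \<in> lie_alg (Gmax w)"
      using zero_lie[of w] by (intro exI[of _ 1] exI[of _ "\<lambda>u. 0"]) simp
    then show "hamvf w z \<in> Rset w z" unfolding Rset_def by simp
  qed
  have IzR: "Imap w z \<in> span (Rset w z)"
  proof -
    have "Imap w z = (1 / c) *\<^sub>R hamvf w z" using hamvf_Imap[OF w z] c by simp
    then show ?thesis using span_scale[OF hR] by metis
  qed
  define al where "al = Qf w (Imap w z) y / n"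
  define y' where "y' = y - al *\<^sub>R Imap w z"
  have y'V: "y' \<in> Vsub (\<lambda>j. w$j = c)"
    unfolding y'_def using subspace_Vsub yV IzV by (metis subspace_diff subspace_scale)
  have zIz: "Qf w z (Imap w z) = 0" using Qf_Imap_self[OF w, of z] Qf_sym[of w z] by simp
  have Q1: "Qf w z y' = 0" unfolding y'_def using yQ zIz by (simp add: Qf_lin)
  have Q2: "Qf w (Imap w z) y' = 0"
    unfolding y'_def al_def using n by (simp add: Qf_lin Qf_Imap_Imap[OF w] n_def)
  have y'R: "y' \<in> span (Rset w z)"
  proof (cases "y' = 0")
    case True then show ?thesis by (simp add: span_zero)
  next
    case False
    define m where "m = Qf w y' y'"
    have m: "m > 0" unfolding m_def by (rule Qf_pos[OF w False])
    define zz where "zz = (1 / sqrt n) *\<^sub>R z"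
    define vv where "vv = (1 / sqrt m) *\<^sub>R y'"
    have zzV: "zz \<in> Vsub (\<lambda>j. w$j = c)" unfolding zz_def using subspace_Vsub z by (metis subspace_scale)
    have vvV: "vv \<in> Vsub (\<lambda>j. w$j = c)" unfolding vv_def using subspace_Vsub y'V by (metis subspace_scale)
    have "Qf w zz zz = 1" unfolding zz_def using n by (simp add: Qf_lin n_def[symmetric])
    moreover have "Qf w vv vv = 1" unfolding vv_def using m by (simp add: Qf_lin m_def[symmetric])
    moreover have "Qf w zz vv = 0" unfolding zz_def vv_def by (simp add: Qf_lin Q1)
    moreover have "Qf w (Imap w zz) vv = 0" unfolding zz_def vv_def by (simp add: Qf_lin Q2 Imap_scale)
    ultimately have BL: "Bmap w zz vv \<in> lie_alg (Gmax w)" and Bzz: "Bmap w zz vv zz = vv"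
      using B_lie[OF w c zzV vvV] Bz[OF w c zzV vvV] by auto
    have "Bmap w zz vv z = sqrt n *\<^sub>R Bmap w zz vv zz"
    proof -
      have "z = sqrt n *\<^sub>R zz" unfolding zz_def using n by simp
      then show ?thesis by (metis linear_scale[OF Bmap_linear])
    qed
    then have "Bmap w zz vv z = sqrt n *\<^sub>R vv" using Bzz by simp
    then have Bz': "Bmap w zz vv z = (sqrt n / sqrt m) *\<^sub>R y'" by (simp add: vv_def)
    have "Bmap w zz vv z \<in> Rset w z"
    proof -
      have "Bmap w zz vv z = 0 *\<^sub>R hamvf w z + Bmap w zz vv z" by simp
      then show ?thesis unfolding Rset_def using BL by blast
    qed
    then have "(sqrt m / sqrt n) *\<^sub>R Bmap w zz vv z \<in> span (Rset w z)"
      by (intro span_scale span_base)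
    moreover have "(sqrt m / sqrt n) *\<^sub>R Bmap w zz vv z = y'" unfolding Bz' using n m by simp
    ultimately show ?thesis by simp
  qed
  have "y = y' + al *\<^sub>R Imap w z" by (simp add: y'_def)
  then show "y \<in> span (Rset w z)" using span_add[OF y'R span_scale[OF IzR]] by metis
qed

lemma dim_V_W:
  assumes w: "\<forall>j. w $ j > 0" and z: "z \<in> Vsub (\<lambda>j. w$j = c)" and z0: "z \<noteq> 0"
  shows "dim (Vsub (\<lambda>j. w$j = c)) = dim (Wset w c z) + 1"
proof -
  have n: "Qf w z z > 0" by (rule Qf_pos[OF w z0])
  have sW: "span (Wset w c z) = Wset w c z" using subspace_Wset by simp
  have "z \<notin> Wset w c z" using n by (simp add: Wset_def)
  then have zW: "z \<notin> span (Wset w c z)" unfolding sW .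
  have "span (insert z (Wset w c z)) = Vsub (\<lambda>j. w$j = c)"
  proof
    show "span (insert z (Wset w c z)) \<subseteq> Vsub (\<lambda>j. w$j = c)"
      by (intro span_minimal subspace_Vsub) (use z in \<open>auto simp: Wset_def\<close>)
    show "Vsub (\<lambda>j. w$j = c) \<subseteq> span (insert z (Wset w c z))"
    proof
      fix y assume yV: "y \<in> Vsub (\<lambda>j. w$j = c)"
      define k where "k = Qf w z y / Qf w z z"
      have "y - k *\<^sub>R z \<in> Wset w c z"
        unfolding Wset_def k_def using n yV z subspace_Vsub
        by (auto simp: Qf_lin intro: subspace_diff subspace_scale)
      then have a: "y - k *\<^sub>R z \<in> span (insert z (Wset w c z))" by (auto intro: span_base)
      have b: "k *\<^sub>R z \<in> span (insert z (Wset w c z))" by (auto intro: span_base span_scale)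
      have "y = (y - k *\<^sub>R z) + k *\<^sub>R z" by simp
      then show "y \<in> span (insert z (Wset w c z))" using span_add[OF a b] by metis
    qed
  qed
  then have "dim (Vsub (\<lambda>j. w$j = c)) = dim (insert z (Wset w c z))" by (metis dim_span)
  also have "\<dots> = dim (Wset w c z) + 1" using zW by (simp add: dim_insert)
  finally show ?thesis .
qed

lemma dim_R_W:
  assumes w: "\<forall>j. w $ j > 0" and c: "c > 0" and z: "z \<in> Vsub (\<lambda>j. w$j = c)" and z0: "z \<noteq> 0"
  shows "dim (Rset w z) = dim (Wset w c z)"
proof (rule antisym)
  show "dim (Rset w z) \<le> dim (Wset w c z)" by (rule dim_subset[OF R_sub_W[OF w c z]])
  have "dim (Wset w c z) \<le> dim (span (Rset w z))" by (rule dim_subset[OF W_sub_spanR[OF w c z z0]])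
  then show "dim (Wset w c z) \<le> dim (Rset w z)" by simp
qed

theorem mainTheorem9:
  fixes w :: "real^'n::finite"
  assumes "\<forall>j. w $ j > 0"
  shows "(\<forall>i j. w $ i / w $ j \<in> \<rat> \<longrightarrow> w $ i = w $ j) \<longleftrightarrow>
         (\<forall>T z. periodic_orbit w T z \<longrightarrow> NDR w T z)"
proof -
  have w: "\<forall>j. w $ j > 0" by fact
  have NDR_iff: "NDR w T z \<longleftrightarrow> dim (E1 w T z) = dim (Rset w z) + 1" for T z
    unfolding NDR_def Rset_def ..
  show ?thesis
  proof
    assume rat: "\<forall>i j. w $ i / w $ j \<in> \<rat> \<longrightarrow> w $ i = w $ j"
    show "\<forall>T z. periodic_orbit w T z \<longrightarrow> NDR w T z"
    proof (intro allI impI)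
      fix T z assume po: "periodic_orbit w T z"
      then have T0: "T \<noteq> 0" and z0: "z \<noteq> 0" and fx: "Phi w T z = z"
        by (auto simp: periodic_orbit_def flow_eq[OF w])
      have zS: "z \<in> Vsub (\<lambda>j. cos (w$j * T) = 1)" by (rule fixed_in_Vsub[OF w fx])
      obtain p where p: "fst z $ p \<noteq> 0 \<or> snd z $ p \<noteq> 0"
        using z0 by (metis prod_eq_iff vec_eq_iff zero_index fst_zero snd_zero)
      have cp: "cos (w$p * T) = 1" using zS p by (auto simp: Vsub_def)
      define c where "c = w $ p"
      have c: "c > 0" using w by (simp add: c_def)
      have Seq: "(\<lambda>j. cos (w$j * T) = 1) = (\<lambda>j. w$j = c)"
      proof
        fix j
        show "(cos (w$j * T) = 1) = (w$j = c)"
        proof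
          assume cj: "cos (w$j * T) = 1"
          obtain nj :: int where nj: "w$j * T = of_int nj * 2 * pi" using cj cos_one_2pi_int by blast
          obtain np :: int where np: "w$p * T = of_int np * 2 * pi" using cp cos_one_2pi_int by blast
          have "np \<noteq> 0" using np T0 w by (metis less_irrefl mult_eq_0_iff of_int_0 mult_zero_left)
          have "w$j / w$p = (w$j * T) / (w$p * T)" using T0 by simp
          also have "\<dots> = of_int nj / of_int np" unfolding nj np by simp
          finally have "w$j / w$p \<in> \<rat>" by simp
          then show "w$j = c" using rat c_def by blast
        next
          assume "w$j = c" then show "cos (w$j * T) = 1" using cp c_def by simp
        qed
      qed
      have zV: "z \<in> Vsub (\<lambda>j. w$j = c)" using zS Seq by simp
      have "dim (E1 w T z) = dim (Vsub (\<lambda>j. w$j = c))" unfolding E1_eq[OF w] Seq ..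
      also have "\<dots> = dim (Wset w c z) + 1" by (rule dim_V_W[OF w zV z0])
      also have "\<dots> = dim (Rset w z) + 1" using dim_R_W[OF w c zV z0] by simp
      finally show "NDR w T z" unfolding NDR_iff .
    qed
  next
    assume ndr: "\<forall>T z. periodic_orbit w T z \<longrightarrow> NDR w T z"
    show "\<forall>i j. w $ i / w $ j \<in> \<rat> \<longrightarrow> w $ i = w $ j"
    proof (intro allI impI)
      fix i j assume "w $ i / w $ j \<in> \<rat>"
      then obtain a b :: int where b: "b > 0" and ab: "w $ i / w $ j = of_int a / of_int b"
        by (metis Rats_cases')
      show "w $ i = w $ j"
      proof (rule ccontr)
        assume ne: "w $ i \<noteq> w $ j"
        have wi: "w $ i > 0" and wj: "w $ j > 0" using w by auto
        define T where "T = of_int b * 2 * pi / w $ j"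
        have T0: "T \<noteq> 0" using b wj by (simp add: T_def)
        have cj: "cos (w$j * T) = 1"
        proof -
          have "w$j * T = of_int b * 2 * pi" using wj by (simp add: T_def)
          then show ?thesis using cos_one_2pi_int by blast
        qed
        have ci: "cos (w$i * T) = 1"
        proof -
          have "w $ i = of_int a / of_int b * w $ j" using ab wj by (simp add: field_simps)
          then have "w$i * T = of_int a * 2 * pi" using wj b by (simp add: T_def field_simps)
          then show ?thesis using cos_one_2pi_int by blast
        qed
        define c where "c = w $ i"
        have c: "c > 0" using wi by (simp add: c_def)
        define z :: "'n phase" where "z = (axis i 1, 0)"
        have z0: "z \<noteq> 0" by (simp add: z_def axis_def vec_eq_iff prod_eq_iff) 
        have zV: "z \<in> Vsub (\<lambda>j. w$j = c)" by (auto simp: z_def Vsub_def axis_def c_def)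
        have zS: "z \<in> Vsub (\<lambda>j. cos (w$j * T) = 1)" using ci by (auto simp: z_def Vsub_def axis_def)
        have "periodic_orbit w T z"
          unfolding periodic_orbit_def flow_eq[OF w] using T0 z0 Vsub_fixed[OF zS] by simp
        then have "dim (E1 w T z) = dim (Rset w z) + 1" using ndr NDR_iff by blast
        also have "\<dots> = dim (Vsub (\<lambda>j. w$j = c))"
          using dim_R_W[OF w c zV z0] dim_V_W[OF w zV z0] by simp
        finally have eq: "dim (Vsub (\<lambda>j. cos (w$j * T) = 1)) = dim (Vsub (\<lambda>j. w$j = c))"
          unfolding E1_eq[OF w] .
        define e :: "'n phase" where "e = (axis j 1, 0)"
        have sub: "insert e (Vsub (\<lambda>j. w$j = c)) \<subseteq> Vsub (\<lambda>j. cos (w$j * T) = 1)"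
        proof -
          have "Vsub (\<lambda>j. w$j = c) \<subseteq> Vsub (\<lambda>j. cos (w$j * T) = 1)"
          proof
            fix y assume y: "y \<in> Vsub (\<lambda>j. w$j = c)"
            have "fst y $ l = 0 \<and> snd y $ l = 0" if "cos (w$l * T) \<noteq> 1" for l
            proof -
              have "w$l \<noteq> c" using that ci c_def by auto
              then show ?thesis using y by (simp add: Vsub_def)
            qed
            then show "y \<in> Vsub (\<lambda>j. cos (w$j * T) = 1)" by (simp add: Vsub_def)
          qed
          moreover have "e \<in> Vsub (\<lambda>j. cos (w$j * T) = 1)" using cj by (auto simp: e_def Vsub_def axis_def)
          ultimately show ?thesis by simp
        qed
        have "e \<notin> Vsub (\<lambda>j. w$j = c)" using ne by (auto simp: e_def Vsub_def axis_def c_def)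
        moreover have spV: "span (Vsub (\<lambda>j. w$j = c)) = Vsub (\<lambda>j. w$j = c)" by (simp add: subspace_Vsub)
        ultimately have "e \<notin> span (Vsub (\<lambda>j. w$j = c))" by (metis spV)
        then have "dim (insert e (Vsub (\<lambda>j. w$j = c))) = dim (Vsub (\<lambda>j. w$j = c)) + 1"
          by (simp add: dim_insert)
        moreover have "dim (insert e (Vsub (\<lambda>j. w$j = c))) \<le> dim (Vsub (\<lambda>j. cos (w$j * T) = 1))"
          by (rule dim_subset[OF sub])
        ultimately show False using eq by simp
      qed
    qed
  qed
qed


end
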